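(* For $i\ge0$, the ring homomorphism $\phi_i:(A/\!/A(i))_*\to(A/\!/A(i-1))_*$ defined on the polynomial generators by $\phi_i(\bar\xi_k^{2^l})=\bar\xi_{k-1}^{2^l}$ for $k>1$ and $\phi_i(\bar\xi_1^{2^{i+1}})=1$ is a map of ungraded $A(i)_*$-comodules.
   Context: $A_*$ is the mod $2$ dual Steenrod algebra, $\bar\xi_k$ the conjugate of Milnor's generator $\xi_k$, $|\bar\xi_k|=2^k-1$, with coproduct $\psi(\bar\xi_k)=\sum_{k_1+k_2=k}\bar\xi_{k_1}\otimes\bar\xi_{k_2}^{2^{k_1}}$. For $i\ge-1$, $A(i)_*=\mathbb{F}_2[\bar\xi_1,\dots,\bar\xi_{i+1}]/(\bar\xi_1^{2^{i+1}},\bar\xi_2^{2^i},\dots,\bar\xi_{i+1}^2)$ is the quotient Hopf algebra of $A_*$ dual to $A(i)$, and $(A/\!/A(i))_*=A_*\square_{A(i)_*}\mathbb{F}_2=\mathbb{F}_2[\bar\xi_1^{2^{i+1}},\bar\xi_2^{2^i},\dots,\bar\xi_{i+1}^2,\bar\xi_{i+2},\bar\xi_{i+3},\dots]$, a left $A_*$-subcomodule algebra of $A_*$; it is regarded as an $A(i)_*$-comodule via $A_*\to A(i)_*$ (and likewise $(A/\!/A(i-1))_*$). *)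

theory Defs
  imports "HOL-Library.Poly_Mapping" "HOL-Library.Z2"
begin

(* Polynomials over F_2 (type bit) in variables of type 'v:
   a polynomial is a finitely supported map  monomial => coefficient,
   a monomial is a finitely supported map  variable => exponent. *)
type_synonym 'v pol = "('v \<Rightarrow>\<^sub>0 nat) \<Rightarrow>\<^sub>0 bit"

definition var :: "'v \<Rightarrow> 'v pol" where
  "var v = Poly_Mapping.single (Poly_Mapping.single v 1) 1"

definition const :: "bit \<Rightarrow> 'v pol" where
  "const c = Poly_Mapping.single 0 c"

definition peval :: "('v \<Rightarrow> 'w pol) \<Rightarrow> 'v pol \<Rightarrow> 'w pol" where
  "peval f p = (\<Sum>m\<in>Poly_Mapping.keys p. const (Poly_Mapping.lookup p m) * (\<Prod>v\<in>Poly_Mapping.keys (m::'v \<Rightarrow>\<^sub>0 nat). f v ^ Poly_Mapping.lookup m v))"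

(* A_star = F_2[xi_1, xi_2, ...]: variable k stands for conj(xi_k), k >= 1;
   variable 0 is not used (A_star = polynomials not involving variable 0). *)
definition Astar :: "nat pol set" where
  "Astar = {p. \<forall>m\<in>Poly_Mapping.keys p. Poly_Mapping.lookup m 0 = 0}"

definition xi :: "nat \<Rightarrow> nat pol" where
  "xi k = (if k = 0 then 1 else var k)"

(* A_star (x) A_star = F_2[xi_k (x) 1, 1 (x) xi_k]: Inl k is xi_k (x) 1, Inr k is 1 (x) xi_k *)
definition xiL :: "nat \<Rightarrow> (nat + nat) pol" where
  "xiL k = (if k = 0 then 1 else var (Inl k))"

definition xiR :: "nat \<Rightarrow> (nat + nat) pol" where
  "xiR k = (if k = 0 then 1 else var (Inr k))"

definition psi :: "nat pol \<Rightarrow> (nat + nat) pol" where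
  "psi = peval (\<lambda>k. \<Sum>k1\<le>k. xiL k1 * xiR (k - k1) ^ (2 ^ k1))"

(* (A//A(n-1))_star for n >= 0 (n = i+1 gives (A//A(i))_star):
   F_2[xi_1^(2^n), xi_2^(2^(n-1)), ..., xi_n^2, xi_(n+1), ...], i.e. the span of the
   monomials in which the exponent of xi_k is divisible by 2^(n+1-k). *)
definition quotA :: "nat \<Rightarrow> nat pol set" where
  "quotA n = {p \<in> Astar. \<forall>m\<in>Poly_Mapping.keys p. \<forall>k\<ge>1. (2::nat) ^ (n + 1 - k) dvd Poly_Mapping.lookup m k}"

(* projection A_star (x) A_star -> A(i)_star (x) A_star, where
   A(i)_star = A_star/(xi_1^(2^(i+1)), xi_2^(2^i), ..., xi_(i+1)^2, xi_(i+2), xi_(i+3), ...):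
   kill the monomials whose left exponent of xi_k is >= 2^(i+2-k). *)
definition truncL :: "nat \<Rightarrow> (nat + nat) pol \<Rightarrow> (nat + nat) pol" where
  "truncL i p = (\<Sum>m\<in>Poly_Mapping.keys p.
      if (\<forall>k\<ge>1. Poly_Mapping.lookup m (Inl k) < 2 ^ (i + 2 - k))
      then Poly_Mapping.single m (Poly_Mapping.lookup p m) else 0)"

definition coact :: "nat \<Rightarrow> nat pol \<Rightarrow> (nat + nat) pol" where
  "coact i a = truncL i (psi a)"

(* id (x) f : A_star (x) A_star -> A_star (x) A_star, extended linearly from monomials *)
definition embR :: "nat pol \<Rightarrow> (nat + nat) pol" where
  "embR = peval (\<lambda>k. var (Inr k))"

definition idtens :: "(nat pol \<Rightarrow> nat pol) \<Rightarrow> (nat + nat) pol \<Rightarrow> (nat + nat) pol" where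
  "idtens f p = (\<Sum>m\<in>Poly_Mapping.keys p. const (Poly_Mapping.lookup p m)
      * (\<Prod>v\<in>{v\<in>Poly_Mapping.keys m. isl v}. var v ^ Poly_Mapping.lookup m v)
      * embR (f (\<Prod>k\<in>{k. Inr k \<in> Poly_Mapping.keys m}. var k ^ Poly_Mapping.lookup m (Inr k))))"

definition ring_hom_on :: "nat pol set \<Rightarrow> nat pol set \<Rightarrow> (nat pol \<Rightarrow> nat pol) \<Rightarrow> bool" where
  "ring_hom_on S T f \<longleftrightarrow> f ` S \<subseteq> T \<and> f 1 = 1 \<and>
     (\<forall>a\<in>S. \<forall>b\<in>S. f (a + b) = f a + f b \<and> f (a * b) = f a * f b)"

(* phi_i on the polynomial generators xi_k^(2^l) of (A//A(i))_star, l = i+2-k *)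
definition phi_gens :: "nat \<Rightarrow> (nat pol \<Rightarrow> nat pol) \<Rightarrow> bool" where
  "phi_gens i f \<longleftrightarrow> f (xi 1 ^ (2 ^ (i + 1))) = 1 \<and>
     (\<forall>k>1. f (xi k ^ (2 ^ (i + 2 - k))) = xi (k - 1) ^ (2 ^ (i + 2 - k)))"

definition comod_map :: "nat \<Rightarrow> nat pol set \<Rightarrow> (nat pol \<Rightarrow> nat pol) \<Rightarrow> bool" where
  "comod_map i S f \<longleftrightarrow> (\<forall>a\<in>S. coact i (f a) = truncL i (idtens f (psi a)))"

end

theory Submission
  imports Defs
begin


lemma const_0[simp]: "const 0 = 0" by (simp add: const_def)
lemma const_1[simp]: "const 1 = 1" by (simp add: const_def)
lemma const_add: "const (a+b) = const a + const b" unfolding const_def by (rule single_add)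
lemma const_mult: "const (a*b) = const a * const b" by (simp only: const_def mult_single add_0)

definition mon :: "('v \<Rightarrow> 'a::comm_monoid_mult) \<Rightarrow> ('v \<Rightarrow>\<^sub>0 nat) \<Rightarrow> 'a" where
  "mon f m = (\<Prod>v\<in>Poly_Mapping.keys m. f v ^ Poly_Mapping.lookup m v)"

lemma peval_alt: "peval f p = (\<Sum>m\<in>Poly_Mapping.keys p. const (Poly_Mapping.lookup p m) * mon f m)"
  by (simp add: peval_def mon_def)

lemma mon_superset: "finite A \<Longrightarrow> Poly_Mapping.keys m \<subseteq> A \<Longrightarrow> mon f m = (\<Prod>v\<in>A. f v ^ Poly_Mapping.lookup m v)"
  unfolding mon_def by (rule prod.mono_neutral_left) (auto simp: in_keys_iff)

lemma mon_add: "mon f (m1 + m2) = mon f m1 * mon f m2"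
proof -
  let ?A = "Poly_Mapping.keys m1 \<union> Poly_Mapping.keys m2"
  have "mon f (m1+m2) = (\<Prod>v\<in>?A. f v ^ Poly_Mapping.lookup (m1+m2) v)"
    by (rule mon_superset) (auto simp: keys_add)
  also have "\<dots> = (\<Prod>v\<in>?A. f v ^ Poly_Mapping.lookup m1 v * f v ^ Poly_Mapping.lookup m2 v)"
    by (simp add: lookup_add power_add)
  also have "\<dots> = mon f m1 * mon f m2"
    by (simp add: prod.distrib mon_superset[of ?A])
  finally show ?thesis .
qed

lemma mon_zero[simp]: "mon f 0 = 1" by (simp add: mon_def)
lemma mon_single[simp]: "mon f (Poly_Mapping.single v n) = f v ^ n" by (simp add: mon_def)

lemma peval_superset: "finite A \<Longrightarrow> Poly_Mapping.keys p \<subseteq> A \<Longrightarrow>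
   peval f p = (\<Sum>m\<in>A. const (Poly_Mapping.lookup p m) * mon f m)"
  unfolding peval_alt by (rule sum.mono_neutral_left) (auto simp: in_keys_iff)

lemma peval_add: "peval f (p + q) = peval f p + peval f q"
proof -
  let ?A = "Poly_Mapping.keys p \<union> Poly_Mapping.keys q"
  have "peval f (p+q) = (\<Sum>m\<in>?A. const (Poly_Mapping.lookup (p+q) m) * mon f m)"
    by (rule peval_superset) (auto simp: keys_add)
  also have "\<dots> = (\<Sum>m\<in>?A. const (Poly_Mapping.lookup p m) * mon f m + const (Poly_Mapping.lookup q m) * mon f m)"
    by (simp only: lookup_add const_add distrib_right)
  also have "\<dots> = peval f p + peval f q"
    by (simp add: sum.distrib peval_superset[of ?A])
  finally show ?thesis .
qed

lemma peval_zero[simp]: "peval f 0 = 0" by (simp add: peval_def)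

lemma peval_single: "peval f (Poly_Mapping.single m c) = const c * mon f m"
  by (simp add: peval_alt)

lemma peval_sum: "peval f (sum h A) = (\<Sum>a\<in>A. peval f (h a))"
  by (induction A rule: infinite_finite_induct) (auto simp: peval_add)

lemma pm_expansion: "p = (\<Sum>m\<in>Poly_Mapping.keys p. Poly_Mapping.single m (Poly_Mapping.lookup p m))"
proof (rule poly_mapping_eqI)
  fix k
  have "Poly_Mapping.lookup (\<Sum>m\<in>Poly_Mapping.keys p. Poly_Mapping.single m (Poly_Mapping.lookup p m)) k
     = (\<Sum>m\<in>Poly_Mapping.keys p. if m = k then Poly_Mapping.lookup p m else 0)"
    by (simp add: lookup_sum lookup_single when_def)
  also have "\<dots> = Poly_Mapping.lookup p k"
    by (simp add: in_keys_iff)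
  finally show "Poly_Mapping.lookup p k = Poly_Mapping.lookup (\<Sum>m\<in>Poly_Mapping.keys p. Poly_Mapping.single m (Poly_Mapping.lookup p m)) k" by simp
qed

lemma peval_single_mult: "peval f (Poly_Mapping.single m c * q) = const c * mon f m * peval f q"
proof -
  have "peval f (Poly_Mapping.single m c * q) = peval f (Poly_Mapping.single m c * (\<Sum>n\<in>Poly_Mapping.keys q. Poly_Mapping.single n (Poly_Mapping.lookup q n)))"
    by (subst pm_expansion[of q]) simp
  also have "\<dots> = (\<Sum>n\<in>Poly_Mapping.keys q. const c * mon f m * (const (Poly_Mapping.lookup q n) * mon f n))"
    by (simp only: sum_distrib_left peval_sum mult_single peval_single const_mult mon_add) (simp add: mult_ac)
  also have "\<dots> = const c * mon f m * peval f q"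
    by (simp add: peval_alt sum_distrib_left)
  finally show ?thesis .
qed

lemma peval_mult: "peval f (p * q) = peval f p * peval f q"
proof -
  have "peval f (p * q) = peval f ((\<Sum>m\<in>Poly_Mapping.keys p. Poly_Mapping.single m (Poly_Mapping.lookup p m)) * q)"
    by (subst pm_expansion[of p]) simp
  also have "\<dots> = (\<Sum>m\<in>Poly_Mapping.keys p. const (Poly_Mapping.lookup p m) * mon f m * peval f q)"
    by (simp add: sum_distrib_right peval_sum peval_single_mult)
  also have "\<dots> = peval f p * peval f q"
    by (simp add: peval_alt sum_distrib_right)
  finally show ?thesis .
qed

lemma peval_one[simp]: "peval f 1 = 1"
  using peval_single[of f 0 1] by simp

lemma peval_const[simp]: "peval f (const c) = const c"
  by (simp add: const_def peval_single)

lemma peval_var[simp]: "peval f (var v) = f v"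
  by (simp add: var_def peval_single)

lemma peval_power: "peval f (p ^ n) = peval f p ^ n"
  by (induction n) (auto simp: peval_mult)

lemma peval_prod: "peval f (prod h A) = (\<Prod>a\<in>A. peval f (h a))"
  by (induction A rule: infinite_finite_induct) (auto simp: peval_mult)

lemma peval_uminus: "peval f (- p) = - peval f p"
proof -
  have "peval f p + peval f (-p) = 0" using peval_add[of f p "-p"] by simp
  then show ?thesis by (metis add.commute eq_neg_iff_add_eq_0)
qed

lemma peval_diff: "peval f (p - q) = peval f p - peval f q"
  using peval_add[of f p "-q"] by (simp add: peval_uminus)

lemma peval_mon: "peval h (mon f m) = mon (\<lambda>v. peval h (f v)) m"
  by (simp add: mon_def peval_prod peval_power)

lemma peval_comp: "peval h (peval f p) = peval (\<lambda>v. peval h (f v)) p"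
  by (simp add: peval_alt[of f] peval_sum peval_mult peval_mon) (simp add: peval_alt)



definition pset :: "(('v \<Rightarrow>\<^sub>0 nat) \<Rightarrow> bool) \<Rightarrow> 'v pol set" where
  "pset P = {p. \<forall>m\<in>Poly_Mapping.keys p. P m}"

lemma pset_iff: "p \<in> pset P \<longleftrightarrow> (\<forall>m\<in>Poly_Mapping.keys p. P m)" by (simp add: pset_def)

lemma pset_0[simp]: "0 \<in> pset P" by (simp add: pset_def)

lemma pset_add: "p \<in> pset P \<Longrightarrow> q \<in> pset P \<Longrightarrow> p + q \<in> pset P"
  using keys_add[of p q] by (auto simp: pset_def)

lemma pset_single: "P m \<Longrightarrow> Poly_Mapping.single m c \<in> pset P"
  by (simp add: pset_def)

lemma pset_sum: "(\<And>a. a \<in> A \<Longrightarrow> h a \<in> pset P) \<Longrightarrow> sum h A \<in> pset P"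
  by (induction A rule: infinite_finite_induct) (auto intro: pset_add)

locale monclosed =
  fixes P :: "('v \<Rightarrow>\<^sub>0 nat) \<Rightarrow> bool"
  assumes P0: "P 0" and Padd: "\<And>a b. P a \<Longrightarrow> P b \<Longrightarrow> P (a + b)"
begin

lemma one_in[simp]: "1 \<in> pset P" using P0 by (simp add: pset_def)

lemma const_in[simp]: "const c \<in> pset P" by (simp add: const_def pset_single P0)

lemma mult_in: "p \<in> pset P \<Longrightarrow> q \<in> pset P \<Longrightarrow> p * q \<in> pset P"
  using keys_mult[of p q] by (auto simp: pset_def intro!: Padd)

lemma power_in: "p \<in> pset P \<Longrightarrow> p ^ n \<in> pset P"
  by (induction n) (auto intro: mult_in)

lemma prod_in: "(\<And>a. a \<in> A \<Longrightarrow> h a \<in> pset P) \<Longrightarrow> prod h A \<in> pset P"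
  by (induction A rule: infinite_finite_induct) (auto intro: mult_in)

end

locale upclosed =
  fixes P :: "('v \<Rightarrow>\<^sub>0 nat) \<Rightarrow> bool"
  assumes Pup: "\<And>a b. P b \<Longrightarrow> P (a + b)"
begin

lemma ideal_in: "p \<in> pset P \<Longrightarrow> q * p \<in> pset P"
  using keys_mult[of q p] by (auto simp: pset_def intro!: Pup)

lemma uminus_in: "p \<in> pset P \<Longrightarrow> - p \<in> pset P"
  using ideal_in[of p "-1"] by simp

lemma diff_in: "p \<in> pset P \<Longrightarrow> q \<in> pset P \<Longrightarrow> p - q \<in> pset P"
  using pset_add[of p P "-q"] uminus_in[of q] by simp

lemma power_diff_in: "x - y \<in> pset P \<Longrightarrow> x ^ n - y ^ n \<in> pset P"
proof (induction n)
  case 0 then show ?case by simp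
next
  case (Suc n)
  have "x ^ Suc n - y ^ Suc n = x * (x ^ n - y ^ n) + y ^ n * (x - y)"
    by (simp add: algebra_simps)
  then show ?case using Suc by (auto intro!: pset_add ideal_in)
qed

lemma prod_diff_in: "(\<And>a. a \<in> A \<Longrightarrow> x a - y a \<in> pset P) \<Longrightarrow> prod x A - prod y A \<in> pset P"
proof (induction A rule: infinite_finite_induct)
  case (insert a A)
  have "prod x (insert a A) - prod y (insert a A) = x a * (prod x A - prod y A) + prod y A * (x a - y a)"
    using insert.hyps by (simp add: algebra_simps)
  then show ?case using insert by (auto intro!: pset_add ideal_in)
qed auto

lemma sum_in: "(\<And>a. a \<in> A \<Longrightarrow> h a \<in> pset P) \<Longrightarrow> sum h A \<in> pset P"
  by (rule pset_sum)

end

lemma pol_add_self[simp]: "(p::'v pol) + p = 0"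
proof (rule poly_mapping_eqI)
  fix k
  have "\<And>b::bit. b + b = 0" by (case_tac b) simp_all
  then have "Poly_Mapping.lookup p k + Poly_Mapping.lookup p k = 0" by blast
  then show "Poly_Mapping.lookup (p + p) k = Poly_Mapping.lookup 0 k" by (simp only: lookup_add lookup_zero)
qed

lemma pol_uminus[simp]: "- (p::'v pol) = p"
  using pol_add_self[of p] by (metis add_right_imp_eq neg_eq_iff_add_eq_0)

lemma pol_diff: "(p::'v pol) - q = p + q"
  by (metis diff_conv_add_uminus pol_uminus)

lemma frob2: "((p::'v pol) + q) ^ 2 = p ^ 2 + q ^ 2"
proof -
  have "(p + q) ^ 2 = p ^ 2 + q ^ 2 + (p * q + p * q)"
    by (simp add: power2_sum mult_2)
  then show ?thesis by simp
qed

lemma frob: "((p::'v pol) + q) ^ (2 ^ l) = p ^ (2 ^ l) + q ^ (2 ^ l)"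
proof (induction l)
  case 0 then show ?case by simp
next
  case (Suc l)
  have "(p + q) ^ (2 ^ Suc l) = ((p + q) ^ (2 ^ l)) ^ 2"
    by (simp add: power_mult[symmetric] mult.commute)
  also have "\<dots> = (p ^ (2 ^ l)) ^ 2 + (q ^ (2 ^ l)) ^ 2" by (simp add: Suc frob2)
  also have "\<dots> = p ^ (2 ^ Suc l) + q ^ (2 ^ Suc l)"
    by (simp add: power_mult[symmetric] mult.commute)
  finally show ?case .
qed

lemma frob_sum: "(sum (h :: 'a \<Rightarrow> 'v pol) A) ^ (2 ^ l) = (\<Sum>a\<in>A. h a ^ (2 ^ l))"
  by (induction A rule: infinite_finite_induct) (auto simp: frob power_0_left)

lemma var_power: "var v ^ n = Poly_Mapping.single (Poly_Mapping.single v n) 1"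
proof (induction n)
  case 0 then show ?case by simp
next
  case (Suc n)
  then show ?case
    by (simp add: var_def mult_single single_add[symmetric])
qed

lemma prod_single: "(\<Prod>k\<in>A. Poly_Mapping.single (h k) (1::'b::comm_semiring_1)) = Poly_Mapping.single (\<Sum>k\<in>A. h k) 1"
  by (induction A rule: infinite_finite_induct) (auto simp: mult_single)



definition good :: "nat \<Rightarrow> (nat + nat \<Rightarrow>\<^sub>0 nat) \<Rightarrow> bool" where
  "good i m \<longleftrightarrow> (\<forall>k\<ge>1. Poly_Mapping.lookup m (Inl k) < 2 ^ (i + 2 - k))"

lemma lookup_truncL: "Poly_Mapping.lookup (truncL i p) m = (if good i m then Poly_Mapping.lookup p m else 0)"
proof -
  have "Poly_Mapping.lookup (truncL i p) m =
     (\<Sum>m'\<in>Poly_Mapping.keys p. if m' = m then (if good i m then Poly_Mapping.lookup p m' else 0) else 0)"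
    unfolding truncL_def good_def[symmetric] lookup_sum
    by (rule sum.cong) (auto simp: lookup_single when_def)
  also have "\<dots> = (if good i m then Poly_Mapping.lookup p m else 0)"
    by (auto simp: in_keys_iff)
  finally show ?thesis .
qed

interpretation bad: upclosed "\<lambda>m. \<not> good i m"
proof
  fix a b :: "nat + nat \<Rightarrow>\<^sub>0 nat"
  assume "\<not> good i b"
  then obtain k where "k \<ge> 1" "Poly_Mapping.lookup b (Inl k) \<ge> 2 ^ (i + 2 - k)"
    by (auto simp: good_def not_less)
  then show "\<not> good i (a + b)"
    by (auto simp: good_def lookup_add not_less intro!: exI[of _ k])
qed

lemma truncL_eq: "p - q \<in> pset (\<lambda>m. \<not> good i m) \<Longrightarrow> truncL i p = truncL i q"
proof (rule poly_mapping_eqI)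
  fix m
  assume a: "p - q \<in> pset (\<lambda>m. \<not> good i m)"
  show "Poly_Mapping.lookup (truncL i p) m = Poly_Mapping.lookup (truncL i q) m"
  proof (cases "good i m")
    case True
    then have "m \<notin> Poly_Mapping.keys (p - q)" using a by (auto simp: pset_def)
    then have "Poly_Mapping.lookup p m - Poly_Mapping.lookup q m = 0"
      by (simp add: in_keys_iff lookup_minus)
    then have "Poly_Mapping.lookup p m = Poly_Mapping.lookup q m" by (rule right_minus_eq[THEN iffD1])
    then show ?thesis using True by (simp add: lookup_truncL)
  qed (simp add: lookup_truncL)
qed

definition Rmon :: "(nat + nat \<Rightarrow>\<^sub>0 nat) \<Rightarrow> nat pol" where
  "Rmon m = (\<Prod>k\<in>{k. Inr k \<in> Poly_Mapping.keys m}. var k ^ Poly_Mapping.lookup m (Inr k))"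

lemma idtens_cong: "(\<And>m. m \<in> Poly_Mapping.keys p \<Longrightarrow> f (Rmon m) = f' (Rmon m)) \<Longrightarrow> idtens f p = idtens f' p"
  unfolding idtens_def Rmon_def[symmetric] by (rule sum.cong) auto

definition Hmap :: "(nat \<Rightarrow> nat pol) \<Rightarrow> nat + nat \<Rightarrow> (nat + nat) pol" where
  "Hmap g v = (case v of Inl k \<Rightarrow> var (Inl k) | Inr k \<Rightarrow> embR (g k))"

lemma finite_Rset: "finite {k. Inr k \<in> Poly_Mapping.keys m}"
proof -
  have "{k. Inr k \<in> Poly_Mapping.keys m} = Inr -` Poly_Mapping.keys m" by auto
  then show ?thesis by (metis finite_keys finite_vimageI inj_Inr)
qed

lemma idtens_peval: "idtens (peval g) p = peval (Hmap g) p"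
proof -
  have *: "(\<Prod>v\<in>{v\<in>Poly_Mapping.keys m. isl v}. var v ^ Poly_Mapping.lookup m v) *
      embR (peval g (\<Prod>k\<in>{k. Inr k \<in> Poly_Mapping.keys m}. var k ^ Poly_Mapping.lookup m (Inr k)))
      = mon (Hmap g) m" for m :: "nat + nat \<Rightarrow>\<^sub>0 nat"
  proof -
    let ?L = "{v\<in>Poly_Mapping.keys m. isl v}" and ?R = "{k. Inr k \<in> Poly_Mapping.keys m}"
    have e1: "embR (peval g (\<Prod>k\<in>?R. var k ^ Poly_Mapping.lookup m (Inr k)))
        = (\<Prod>k\<in>?R. Hmap g (Inr k) ^ Poly_Mapping.lookup m (Inr k))"
      by (simp add: embR_def peval_comp peval_prod peval_power Hmap_def)
    also have "\<dots> = (\<Prod>v\<in>Inr ` ?R. Hmap g v ^ Poly_Mapping.lookup m v)"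
      by (subst prod.reindex) (auto simp: inj_on_def)
    finally have e1': "embR (peval g (\<Prod>k\<in>?R. var k ^ Poly_Mapping.lookup m (Inr k)))
        = (\<Prod>v\<in>Inr ` ?R. Hmap g v ^ Poly_Mapping.lookup m v)" .
    have e2: "(\<Prod>v\<in>?L. var v ^ Poly_Mapping.lookup m v) = (\<Prod>v\<in>?L. Hmap g v ^ Poly_Mapping.lookup m v)"
      by (rule prod.cong) (auto simp: Hmap_def split: sum.split)
    have ks: "Poly_Mapping.keys m = ?L \<union> Inr ` ?R"
      by (auto simp: image_iff) (metis sum.collapse(2))
    have "mon (Hmap g) m = (\<Prod>v\<in>?L \<union> Inr ` ?R. Hmap g v ^ Poly_Mapping.lookup m v)"
      unfolding mon_def using ks by simp
    also have "\<dots> = (\<Prod>v\<in>?L. Hmap g v ^ Poly_Mapping.lookup m v) * (\<Prod>v\<in>Inr ` ?R. Hmap g v ^ Poly_Mapping.lookup m v)"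
      by (rule prod.union_disjoint) (auto simp: finite_Rset)
    finally show ?thesis using e1' e2 by simp
  qed
  show ?thesis
    unfolding idtens_def peval_alt[of "Hmap g"]
    by (rule sum.cong) (auto simp: * mult.assoc)
qed



definition Qmon :: "nat \<Rightarrow> (nat \<Rightarrow>\<^sub>0 nat) \<Rightarrow> bool" where
  "Qmon n m \<longleftrightarrow> Poly_Mapping.lookup m 0 = 0 \<and> (\<forall>k\<ge>1. (2::nat) ^ (n + 1 - k) dvd Poly_Mapping.lookup m k)"

lemma quotA_pset: "quotA n = pset (Qmon n)"
  by (auto simp: quotA_def Astar_def pset_def Qmon_def)

interpretation Q: monclosed "Qmon n"
  by standard (auto simp: Qmon_def lookup_add)

definition gfun :: "nat \<Rightarrow> nat pol" where
  "gfun k = (if k \<le> 1 then 1 else var (k - 1))"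

abbreviation Phi :: "nat pol \<Rightarrow> nat pol" where "Phi \<equiv> peval gfun"

lemma Phi_maps: "p \<in> quotA (i + 1) \<Longrightarrow> Phi p \<in> quotA i"
proof -
  assume p: "p \<in> quotA (i + 1)"
  have "gfun k ^ Poly_Mapping.lookup m k \<in> pset (Qmon i)"
    if "Qmon (i + 1) m" for m k
  proof (cases "k \<le> 1")
    case True then show ?thesis by (simp add: gfun_def)
  next
    case False
    have "(2::nat) ^ (i + 1 - (k - 1)) dvd Poly_Mapping.lookup m k"
      using that False by (auto simp: Qmon_def)
    then have "Qmon i (Poly_Mapping.single (k - 1) (Poly_Mapping.lookup m k))"
      using False by (auto simp: Qmon_def lookup_single when_def)
    then show ?thesis using False by (simp add: gfun_def var_power pset_single)
  qed
  then have "mon gfun m \<in> pset (Qmon i)" if "Qmon (i + 1) m" for m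
    using that unfolding mon_def by (intro Q.prod_in) auto
  then show ?thesis using p unfolding quotA_pset peval_alt
    by (intro pset_sum Q.mult_in Q.const_in) (auto simp: pset_def)
qed

lemma Phi_gens: "phi_gens i Phi"
  unfolding phi_gens_def by (auto simp: peval_power xi_def gfun_def)

lemma Phi_hom: "ring_hom_on (quotA (i + 1)) (quotA i) Phi"
  unfolding ring_hom_on_def using Phi_maps by (auto simp: peval_add peval_mult)

definition gen :: "nat \<Rightarrow> nat \<Rightarrow> nat pol" where
  "gen i k = xi k ^ (2 ^ (i + 2 - k))"

lemma gen_single: "k \<ge> 1 \<Longrightarrow> gen i k = Poly_Mapping.single (Poly_Mapping.single k (2 ^ (i + 2 - k))) 1"
  by (simp add: gen_def xi_def var_power)

lemma gen_in: "k \<ge> 1 \<Longrightarrow> gen i k \<in> quotA (i + 1)"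
  unfolding quotA_pset gen_single
  by (rule pset_single) (auto simp: Qmon_def lookup_single when_def)

lemma mono_as_gens:
  assumes "Qmon (i + 1) m"
  shows "Poly_Mapping.single m 1 = (\<Prod>k\<in>Poly_Mapping.keys m. gen i k ^ (Poly_Mapping.lookup m k div 2 ^ (i + 2 - k)))"
proof -
  have "gen i k ^ (Poly_Mapping.lookup m k div 2 ^ (i + 2 - k)) = Poly_Mapping.single (Poly_Mapping.single k (Poly_Mapping.lookup m k)) 1"
    if "k \<in> Poly_Mapping.keys m" for k
  proof -
    have k1: "k \<ge> 1" using that assms by (cases k) (auto simp: Qmon_def in_keys_iff)
    have "(2::nat) ^ (i + 2 - k) dvd Poly_Mapping.lookup m k" using assms k1 by (auto simp: Qmon_def)
    then have e: "2 ^ (i + 2 - k) * (Poly_Mapping.lookup m k div 2 ^ (i + 2 - k)) = Poly_Mapping.lookup m k" by simp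
    have "gen i k ^ (Poly_Mapping.lookup m k div 2 ^ (i + 2 - k)) = var k ^ (2 ^ (i + 2 - k) * (Poly_Mapping.lookup m k div 2 ^ (i + 2 - k)))"
      using k1 by (simp only: gen_def xi_def power_mult) simp
    also have "\<dots> = var k ^ Poly_Mapping.lookup m k" by (simp only: e)
    finally show ?thesis by (simp add: var_power)
  qed
  then have "(\<Prod>k\<in>Poly_Mapping.keys m. gen i k ^ (Poly_Mapping.lookup m k div 2 ^ (i + 2 - k)))
      = (\<Prod>k\<in>Poly_Mapping.keys m. Poly_Mapping.single (Poly_Mapping.single k (Poly_Mapping.lookup m k)) 1)"
    by (rule prod.cong[OF refl])
  also have "\<dots> = Poly_Mapping.single m 1"
    by (simp add: prod_single pm_expansion[of m, symmetric])
  finally show ?thesis by simp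
qed

context
  fixes i :: nat and phi :: "nat pol \<Rightarrow> nat pol"
  assumes hom: "ring_hom_on (quotA (i + 1)) (quotA i) phi" and gens: "phi_gens i phi"
begin

lemma phi_add: "a \<in> quotA (i + 1) \<Longrightarrow> b \<in> quotA (i + 1) \<Longrightarrow> phi (a + b) = phi a + phi b"
  using hom by (simp add: ring_hom_on_def)

lemma phi_mult: "a \<in> quotA (i + 1) \<Longrightarrow> b \<in> quotA (i + 1) \<Longrightarrow> phi (a * b) = phi a * phi b"
  using hom by (simp add: ring_hom_on_def)

lemma phi_0: "phi 0 = 0"
proof -
  have "phi 0 = phi 0 + phi 0" using phi_add[of 0 0] by (simp add: quotA_pset)
  then show ?thesis by simp
qed

lemma phi_sum: "(\<And>a. a \<in> A \<Longrightarrow> h a \<in> quotA (i + 1)) \<Longrightarrow> phi (sum h A) = (\<Sum>a\<in>A. phi (h a))"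
proof (induction A rule: infinite_finite_induct)
  case (insert a A)
  then have "sum h A \<in> quotA (i + 1)" unfolding quotA_pset by (intro pset_sum) auto
  then show ?case using insert by (simp add: phi_add)
qed (auto simp: phi_0)

lemma phi_prod: "(\<And>a. a \<in> A \<Longrightarrow> h a \<in> quotA (i + 1)) \<Longrightarrow> phi (prod h A) = (\<Prod>a\<in>A. phi (h a))"
proof (induction A rule: infinite_finite_induct)
  case (insert a A)
  then have "prod h A \<in> quotA (i + 1)" unfolding quotA_pset by (intro Q.prod_in) auto
  then show ?case using insert by (simp add: phi_mult)
qed (use hom in \<open>auto simp: ring_hom_on_def\<close>)

lemma phi_power: "x \<in> quotA (i + 1) \<Longrightarrow> phi (x ^ n) = phi x ^ n"
proof (induction n)
  case (Suc n)
  then have "x ^ n \<in> quotA (i + 1)" unfolding quotA_pset by (intro Q.power_in) auto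
  then show ?case using Suc by (simp add: phi_mult)
qed (use hom in \<open>auto simp: ring_hom_on_def\<close>)

lemma phi_gen: "k \<ge> 1 \<Longrightarrow> phi (gen i k) = Phi (gen i k)"
proof (cases "k = 1")
  case True
  then show ?thesis using gens Phi_gens[of i] by (simp add: phi_gens_def gen_def)
next
  case False
  assume "k \<ge> 1"
  then have "k > 1" using False by simp
  then show ?thesis using gens Phi_gens[of i] by (simp add: phi_gens_def gen_def)
qed

lemma phi_mono: "Qmon (i + 1) m \<Longrightarrow> phi (Poly_Mapping.single m 1) = Phi (Poly_Mapping.single m 1)"
proof -
  assume q: "Qmon (i + 1) m"
  have k1: "k \<ge> 1" if "k \<in> Poly_Mapping.keys m" for k
    using that q by (cases k) (auto simp: Qmon_def in_keys_iff)
  have gi: "gen i k ^ n \<in> quotA (i + 1)" if "k \<in> Poly_Mapping.keys m" for k n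
    using gen_in[OF k1[OF that], of i] unfolding quotA_pset by (rule Q.power_in)
  have "phi (\<Prod>k\<in>Poly_Mapping.keys m. gen i k ^ (Poly_Mapping.lookup m k div 2 ^ (i + 2 - k)))
      = (\<Prod>k\<in>Poly_Mapping.keys m. phi (gen i k ^ (Poly_Mapping.lookup m k div 2 ^ (i + 2 - k))))"
    by (rule phi_prod) (rule gi)
  also have "\<dots> = (\<Prod>k\<in>Poly_Mapping.keys m. Phi (gen i k ^ (Poly_Mapping.lookup m k div 2 ^ (i + 2 - k))))"
  proof (rule prod.cong[OF refl])
    fix k assume "k \<in> Poly_Mapping.keys m"
    then show "phi (gen i k ^ (Poly_Mapping.lookup m k div 2 ^ (i + 2 - k))) = Phi (gen i k ^ (Poly_Mapping.lookup m k div 2 ^ (i + 2 - k)))"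
      using phi_power[OF gen_in[OF k1]] phi_gen[OF k1] by (simp add: peval_power)
  qed
  also have "\<dots> = Phi (\<Prod>k\<in>Poly_Mapping.keys m. gen i k ^ (Poly_Mapping.lookup m k div 2 ^ (i + 2 - k)))"
    by (simp add: peval_prod)
  finally show ?thesis
    unfolding mono_as_gens[OF q] .
qed

lemma phi_eq: "a \<in> quotA (i + 1) \<Longrightarrow> phi a = Phi a"
proof -
  assume a: "a \<in> quotA (i + 1)"
  have a1: "Poly_Mapping.lookup a m = 1" if "m \<in> Poly_Mapping.keys a" for m
    using that by (simp add: in_keys_iff)
  have ae: "a = (\<Sum>m\<in>Poly_Mapping.keys a. Poly_Mapping.single m 1)"
    by (subst pm_expansion) (simp add: a1)
  have q: "Qmon (i + 1) m" if "m \<in> Poly_Mapping.keys a" for m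
    using a that by (simp add: quotA_pset pset_def)
  have "phi a = (\<Sum>m\<in>Poly_Mapping.keys a. phi (Poly_Mapping.single m 1))"
    by (subst ae) (rule phi_sum, unfold quotA_pset, rule pset_single, rule q)
  also have "\<dots> = (\<Sum>m\<in>Poly_Mapping.keys a. Phi (Poly_Mapping.single m 1))"
    by (rule sum.cong[OF refl], rule phi_mono, rule q)
  also have "\<dots> = Phi a"
    by (subst (2) ae) (simp add: peval_sum)
  finally show ?thesis .
qed

end



definition psigen :: "nat \<Rightarrow> (nat + nat) pol" where
  "psigen k = (\<Sum>k1\<le>k. xiL k1 * xiR (k - k1) ^ (2 ^ k1))"

lemma psi_peval: "psi = peval psigen"
  unfolding psi_def psigen_def[abs_def] ..

definition RQ :: "nat \<Rightarrow> (nat + nat \<Rightarrow>\<^sub>0 nat) \<Rightarrow> bool" where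
  "RQ i m \<longleftrightarrow> Poly_Mapping.lookup m (Inr 0) = 0 \<and> (\<forall>k\<ge>1. (2::nat) ^ (i + 2 - k) dvd Poly_Mapping.lookup m (Inr k))"

interpretation R: monclosed "RQ i"
  by standard (auto simp: RQ_def lookup_add)

lemma xiL_pow_in: "xiL k1 ^ n \<in> pset (RQ i)"
  by (cases "k1 = 0") (auto simp: xiL_def var_power intro!: pset_single simp: RQ_def lookup_single when_def)

lemma xiR_pow_in:
  assumes "k1 \<le> k"
  shows "xiR (k - k1) ^ (2 ^ k1 * 2 ^ (i + 2 - k)) \<in> pset (RQ i)"
proof (cases "k - k1 = 0")
  case True then show ?thesis by (simp add: xiR_def)
next
  case False
  have "i + 2 - (k - k1) \<le> k1 + (i + 2 - k)" using assms by linarith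
  then have "(2::nat) ^ (i + 2 - (k - k1)) dvd 2 ^ k1 * 2 ^ (i + 2 - k)"
    by (simp add: le_imp_power_dvd power_add[symmetric])
  then show ?thesis using False
    by (auto simp: xiR_def var_power intro!: pset_single simp: RQ_def lookup_single when_def)
qed

lemma psigen_pow_in: "psigen k ^ (2 ^ (i + 2 - k)) \<in> pset (RQ i)"
proof -
  have "psigen k ^ (2 ^ (i + 2 - k)) = (\<Sum>k1\<le>k. xiL k1 ^ (2 ^ (i + 2 - k)) * xiR (k - k1) ^ (2 ^ k1 * 2 ^ (i + 2 - k)))"
    by (simp add: psigen_def frob_sum power_mult_distrib power_mult)
  also have "\<dots> \<in> pset (RQ i)"
    by (intro pset_sum R.mult_in xiL_pow_in xiR_pow_in) auto
  finally show ?thesis .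
qed

lemma pow_split:
  assumes "Qmon (i + 1) m" "k \<in> Poly_Mapping.keys m"
  shows "k \<ge> 1" "(x::'a::monoid_mult) ^ Poly_Mapping.lookup m k = (x ^ (2 ^ (i + 2 - k))) ^ (Poly_Mapping.lookup m k div 2 ^ (i + 2 - k))"
proof -
  show k1: "k \<ge> 1" using assms by (cases k) (auto simp: Qmon_def in_keys_iff)
  have "(2::nat) ^ (i + 2 - k) dvd Poly_Mapping.lookup m k" using assms k1 by (auto simp: Qmon_def)
  then show "x ^ Poly_Mapping.lookup m k = (x ^ (2 ^ (i + 2 - k))) ^ (Poly_Mapping.lookup m k div 2 ^ (i + 2 - k))"
    by (simp add: power_mult[symmetric])
qed

lemma psi_in: "a \<in> quotA (i + 1) \<Longrightarrow> psi a \<in> pset (RQ i)"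
proof -
  assume a: "a \<in> quotA (i + 1)"
  have "mon psigen m \<in> pset (RQ i)" if q: "Qmon (i + 1) m" for m
    unfolding mon_def
  proof (rule R.prod_in)
    fix k assume "k \<in> Poly_Mapping.keys m"
    then have "psigen k ^ Poly_Mapping.lookup m k = (psigen k ^ (2 ^ (i + 2 - k))) ^ (Poly_Mapping.lookup m k div 2 ^ (i + 2 - k))"
      by (rule pow_split(2)[OF q])
    then show "psigen k ^ Poly_Mapping.lookup m k \<in> pset (RQ i)"
      using R.power_in[OF psigen_pow_in] by simp
  qed
  then show ?thesis using a unfolding psi_peval peval_alt quotA_pset
    by (intro pset_sum R.mult_in R.const_in) (auto simp: pset_def)
qed

lemma Rmon_in: "RQ i m \<Longrightarrow> Rmon m \<in> quotA (i + 1)"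
  unfolding Rmon_def quotA_pset
proof (rule Q.prod_in)
  fix k assume r: "RQ i m" and k: "k \<in> {k. Inr k \<in> Poly_Mapping.keys m}"
  then have "k \<noteq> 0" by (cases k) (auto simp: RQ_def in_keys_iff)
  then show "var k ^ Poly_Mapping.lookup m (Inr k) \<in> pset (Qmon (i + 1))"
    using r by (auto simp: var_power intro!: pset_single simp: Qmon_def RQ_def lookup_single when_def)
qed



lemma H_xiL: "peval (Hmap g) (xiL k) = xiL k"
  by (simp add: xiL_def Hmap_def)

lemma H_xiR: "peval (Hmap gfun) (xiR b) = xiR (b - 1)"
  by (auto simp: xiR_def Hmap_def embR_def gfun_def)

lemma psigen_0: "psigen 0 = 1"
  by (simp add: psigen_def xiL_def xiR_def)

lemma F_eq: "psi (gfun (Suc j)) = psigen j"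
  by (cases "j = 0") (auto simp: gfun_def psi_peval psigen_0)

lemma G_eq: "peval (Hmap gfun) (psigen (Suc j)) = psigen j + var (Inl (Suc j))"
proof -
  have "peval (Hmap gfun) (psigen (Suc j)) = (\<Sum>k1\<le>Suc j. xiL k1 * xiR (Suc j - k1 - 1) ^ (2 ^ k1))"
    by (simp only: psigen_def peval_sum peval_mult peval_power H_xiL H_xiR)
  also have "\<dots> = (\<Sum>k1\<le>j. xiL k1 * xiR (j - k1) ^ (2 ^ k1)) + xiL (Suc j) * xiR 0 ^ (2 ^ Suc j)"
    by (simp add: sum.atMost_Suc)
  also have "\<dots> = psigen j + var (Inl (Suc j))"
    by (simp add: psigen_def xiL_def xiR_def)
  finally show ?thesis .
qed

lemma main_diff:
  assumes a: "a \<in> quotA (i + 1)"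
  shows "peval (\<lambda>k. peval (Hmap gfun) (psigen k)) a - peval (\<lambda>k. psi (gfun k)) a \<in> pset (\<lambda>m. \<not> good i m)"
proof -
  let ?G = "\<lambda>k. peval (Hmap gfun) (psigen k)" and ?F = "\<lambda>k. psi (gfun k)"
  have gen_diff: "?G k ^ (2 ^ (i + 2 - k)) - ?F k ^ (2 ^ (i + 2 - k)) \<in> pset (\<lambda>m. \<not> good i m)"
    if k1: "k \<ge> 1" for k
  proof -
    obtain j where kj: "k = Suc j" using k1 by (cases k) auto
    have "?G k ^ (2 ^ (i + 2 - k)) - ?F k ^ (2 ^ (i + 2 - k)) = var (Inl k) ^ (2 ^ (i + 2 - k))"
      by (simp add: kj G_eq F_eq frob)
    also have "\<dots> = Poly_Mapping.single (Poly_Mapping.single (Inl k) (2 ^ (i + 2 - k))) 1"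
      by (rule var_power)
    also have "\<dots> \<in> pset (\<lambda>m. \<not> good i m)"
      using k1 by (intro pset_single) (auto simp: good_def intro!: exI[of _ k])
    finally show ?thesis .
  qed
  have mon_diff: "mon ?G m - mon ?F m \<in> pset (\<lambda>m. \<not> good i m)" if q: "Qmon (i + 1) m" for m
    unfolding mon_def
  proof (rule bad.prod_diff_in)
    fix k assume k: "k \<in> Poly_Mapping.keys m"
    show "?G k ^ Poly_Mapping.lookup m k - ?F k ^ Poly_Mapping.lookup m k \<in> pset (\<lambda>m. \<not> good i m)"
      unfolding pow_split(2)[OF q k, of "?G k"] pow_split(2)[OF q k, of "?F k"]
      by (rule bad.power_diff_in, rule gen_diff, rule pow_split(1)[OF q k])
  qed
  have "peval ?G a - peval ?F a = (\<Sum>m\<in>Poly_Mapping.keys a. const (Poly_Mapping.lookup a m) * (mon ?G m - mon ?F m))"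
    by (simp add: peval_alt sum_subtractf right_diff_distrib)
  also have "\<dots> \<in> pset (\<lambda>m. \<not> good i m)"
  proof (rule bad.sum_in)
    fix m assume "m \<in> Poly_Mapping.keys a"
    then have "Qmon (i + 1) m" using a by (simp add: quotA_pset pset_def)
    then show "const (Poly_Mapping.lookup a m) * (mon ?G m - mon ?F m) \<in> pset (\<lambda>m. \<not> good i m)"
      by (intro bad.ideal_in mon_diff)
  qed
  finally show ?thesis .
qed

theorem lemma5p1:
  fixes i :: nat
  shows "(\<exists>\<phi>. ring_hom_on (quotA (i + 1)) (quotA i) \<phi> \<and> phi_gens i \<phi>) \<and>
         (\<forall>\<phi>. ring_hom_on (quotA (i + 1)) (quotA i) \<phi> \<and> phi_gens i \<phi> \<longrightarrow>
               comod_map i (quotA (i + 1)) \<phi>)"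
proof (intro conjI allI impI)
  show "\<exists>\<phi>. ring_hom_on (quotA (i + 1)) (quotA i) \<phi> \<and> phi_gens i \<phi>"
    using Phi_hom Phi_gens by blast
next
  fix phi
  assume h: "ring_hom_on (quotA (i + 1)) (quotA i) phi \<and> phi_gens i phi"
  show "comod_map i (quotA (i + 1)) phi"
    unfolding comod_map_def
  proof
    fix a assume a: "a \<in> quotA (i + 1)"
    have l: "coact i (phi a) = truncL i (peval (\<lambda>k. psi (gfun k)) a)"
      unfolding coact_def phi_eq[OF conjunct1[OF h] conjunct2[OF h] a]
      by (simp add: psi_peval peval_comp)
    have "idtens phi (psi a) = idtens Phi (psi a)"
    proof (rule idtens_cong)
      fix m assume "m \<in> Poly_Mapping.keys (psi a)"
      then have "RQ i m" using psi_in[OF a] by (simp add: pset_def)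
      then show "phi (Rmon m) = Phi (Rmon m)"
        using phi_eq[OF conjunct1[OF h] conjunct2[OF h] Rmon_in] by blast
    qed
    also have "\<dots> = peval (\<lambda>k. peval (Hmap gfun) (psigen k)) a"
      by (simp add: idtens_peval psi_peval peval_comp)
    finally have r: "truncL i (idtens phi (psi a)) = truncL i (peval (\<lambda>k. peval (Hmap gfun) (psigen k)) a)"
      by simp
    show "coact i (phi a) = truncL i (idtens phi (psi a))"
      unfolding l r by (rule truncL_eq[OF main_diff[OF a], symmetric])
  qed
qed

end
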